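(* For $r\in\mathbb{Z}$ and $\alpha=(\alpha_n)_{n\in\mathbb{Z}}\in(k^\times)^{\mathbb{Z}}$ put $r\cdot\alpha=(\alpha_{n-r})_{n\in\mathbb{Z}}$, and let $(k^\times)^{\mathbb{Z}}\rtimes\mathbb{Z}$ be the set of pairs $(\alpha,r)$ with multiplication $(\alpha,r)(\beta,t)=(\alpha\,(r\cdot\beta),\,r+t)$ (product in $(k^\times)^{\mathbb{Z}}$ componentwise). Let $\theta_r:H\to H$ be the linear map $\theta_r(x^ny^m)=x^{n+r}y^m$, and let $\phi_\alpha:H\to H$ be the linear map with $\phi_\alpha(x^n)=x^n$ and $\phi_\alpha(x^ny^m)=\big(\prod_{i=0}^{m-1}\alpha_{n+i}\big)x^ny^m$ for $m\geq1$. Then $$\Psi:(k^\times)^{\mathbb{Z}}\rtimes\mathbb{Z}\to\mathrm{Aut}_c^{gr}(H),\qquad \Psi(\alpha,r)=\phi_\alpha\theta_r,$$ is a group isomorphism.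
   Context: Let $k$ be a field and $0\neq q\in k$ not a root of unity. Let $H=k_q[x,x^{-1},y]$ be the $k$-algebra generated by $x,x^{-1},y$ subject to $xx^{-1}=x^{-1}x=1$, $yx=qxy$, a Hopf algebra with $\Delta(x)=x\otimes x$, $\Delta(x^{-1})=x^{-1}\otimes x^{-1}$, $\Delta(y)=y\otimes x+1\otimes y$, $\varepsilon(x)=1$, $\varepsilon(y)=0$. The elements $x^ny^m$ ($n\in\mathbb{Z}$, $m\in\mathbb{N}$) form a $k$-basis, and $\Delta(x^ny^m)=\sum_{i=0}^m\binom{m}{i}_q x^ny^i\otimes x^{n+i}y^{m-i}$ with $\binom{m}{i}_q$ the $q$-binomial coefficients $\frac{(m)!_q}{(i)!_q(m-i)!_q}$, $(n)_q=1+q+\dots+q^{n-1}$, $(n)!_q=(n)_q\cdots(1)_q$. Let $H_0=\mathrm{span}\{x^n\}$, $H(m)=H_0y^m$, so $H=\bigoplus_{m\ge0}H(m)$ is a graded coalgebra. $\mathrm{Aut}_c^{gr}(H)$ is the group (under composition) of coalgebra automorphisms $\phi$ of $H$ with $\phi(H(m))\subseteq H(m)$ for all $m\geq0$. *)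

theory Defs
  imports "HOL-Library.Poly_Mapping" "HOL-Algebra.Group"
begin

text \<open>The quantum plane Hopf algebra H = k_q[x,x^-1,y] is modelled as the k-vector space
  of finitely supported coefficient functions on its basis; the basis element x^n y^m is
  indexed by the pair (n,m) :: int * nat.  The tensor product H (x) H is modelled likewise
  with basis (x^n y^m) (x) (x^n' y^m') indexed by ((n,m),(n',m')).\<close>

type_synonym 'k qH = "(int \<times> nat) \<Rightarrow>\<^sub>0 'k"
type_synonym 'k qHH = "((int \<times> nat) \<times> (int \<times> nat)) \<Rightarrow>\<^sub>0 'k"

definition smul :: "'k::field \<Rightarrow> ('a \<Rightarrow>\<^sub>0 'k) \<Rightarrow> ('a \<Rightarrow>\<^sub>0 'k)" where
  "smul c v = Poly_Mapping.map (\<lambda>a. c * a) v"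

definition lin_ext :: "('a \<Rightarrow> ('b \<Rightarrow>\<^sub>0 'k::field)) \<Rightarrow> ('a \<Rightarrow>\<^sub>0 'k) \<Rightarrow> ('b \<Rightarrow>\<^sub>0 'k)" where
  "lin_ext g v = (\<Sum>a\<in>Poly_Mapping.keys v. smul (Poly_Mapping.lookup v a) (g a))"

definition is_linear :: "(('a \<Rightarrow>\<^sub>0 'k::field) \<Rightarrow> ('b \<Rightarrow>\<^sub>0 'k)) \<Rightarrow> bool" where
  "is_linear f \<longleftrightarrow> (\<forall>u v. f (u + v) = f u + f v) \<and> (\<forall>c v. f (smul c v) = smul c (f v))"

definition qint :: "'k::field \<Rightarrow> nat \<Rightarrow> 'k" where
  "qint q n = (\<Sum>j<n. q ^ j)"

definition qfact :: "'k::field \<Rightarrow> nat \<Rightarrow> 'k" where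
  "qfact q n = (\<Prod>j\<in>{1..n}. qint q j)"

definition qbinom :: "'k::field \<Rightarrow> nat \<Rightarrow> nat \<Rightarrow> 'k" where
  "qbinom q m i = qfact q m / (qfact q i * qfact q (m - i))"

definition qDelta :: "'k::field \<Rightarrow> 'k qH \<Rightarrow> 'k qHH" where
  "qDelta q = lin_ext (\<lambda>(n, m).
      (\<Sum>i\<in>{0..m}. Poly_Mapping.single ((n, i), (n + int i, m - i)) (qbinom q m i)))"

definition qeps :: "'k::field qH \<Rightarrow> 'k" where
  "qeps v = (\<Sum>a\<in>Poly_Mapping.keys v. if snd a = 0 then Poly_Mapping.lookup v a else 0)"

definition tens :: "('a \<Rightarrow>\<^sub>0 'k::field) \<Rightarrow> ('b \<Rightarrow>\<^sub>0 'k) \<Rightarrow> (('a \<times> 'b) \<Rightarrow>\<^sub>0 'k)" where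
  "tens u v = (\<Sum>a\<in>Poly_Mapping.keys u. \<Sum>b\<in>Poly_Mapping.keys v.
      Poly_Mapping.single (a, b) (Poly_Mapping.lookup u a * Poly_Mapping.lookup v b))"

definition tens_map :: "('k::field qH \<Rightarrow> 'k qH) \<Rightarrow> ('k qH \<Rightarrow> 'k qH) \<Rightarrow> 'k qHH \<Rightarrow> 'k qHH" where
  "tens_map f g = lin_ext (\<lambda>(a, b). tens (f (Poly_Mapping.single a 1)) (g (Poly_Mapping.single b 1)))"

definition coalg_aut :: "'k::field \<Rightarrow> ('k qH \<Rightarrow> 'k qH) \<Rightarrow> bool" where
  "coalg_aut q f \<longleftrightarrow> is_linear f \<and> bij f \<and>
     (\<forall>v. qDelta q (f v) = tens_map f f (qDelta q v)) \<and> (\<forall>v. qeps (f v) = qeps v)"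

definition in_Hm :: "nat \<Rightarrow> 'k::field qH \<Rightarrow> bool" where
  "in_Hm m v \<longleftrightarrow> (\<forall>a\<in>Poly_Mapping.keys v. snd a = m)"

definition graded :: "('k::field qH \<Rightarrow> 'k qH) \<Rightarrow> bool" where
  "graded f \<longleftrightarrow> (\<forall>m v. in_Hm m v \<longrightarrow> in_Hm m (f v))"

definition AutGr :: "'k::field \<Rightarrow> ('k qH \<Rightarrow> 'k qH) monoid" where
  "AutGr q = \<lparr>carrier = {f. coalg_aut q f \<and> graded f}, mult = (\<circ>), one = id\<rparr>"

definition semidir :: "((int \<Rightarrow> 'k::field) \<times> int) monoid" where
  "semidir = \<lparr>carrier = {(\<alpha>, r). \<forall>n. \<alpha> n \<noteq> 0},
     mult = (\<lambda>(\<alpha>, r) (\<beta>, t). (\<lambda>n. \<alpha> n * \<beta> (n - r), r + t)),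
     one = (\<lambda>_. 1, 0)\<rparr>"

definition theta :: "int \<Rightarrow> 'k::field qH \<Rightarrow> 'k qH" where
  "theta r = lin_ext (\<lambda>(n, m). Poly_Mapping.single (n + r, m) 1)"

definition phi :: "(int \<Rightarrow> 'k::field) \<Rightarrow> 'k qH \<Rightarrow> 'k qH" where
  "phi \<alpha> = lin_ext (\<lambda>(n, m). Poly_Mapping.single (n, m) (\<Prod>i<m. \<alpha> (n + int i)))"

definition Psi :: "(int \<Rightarrow> 'k::field) \<times> int \<Rightarrow> 'k qH \<Rightarrow> 'k qH" where
  "Psi p = phi (fst p) \<circ> theta (snd p)"

end

theory Submission
  imports Defs
begin

abbreviation lk where "lk \<equiv> Poly_Mapping.lookup"
abbreviation sg where "sg \<equiv> Poly_Mapping.single"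
abbreviation ks where "ks \<equiv> Poly_Mapping.keys"


lemma lookup_smul[simp]: "lk (smul c v) k = c * lk v k"
  by (simp add: smul_def map.rep_eq when_def)

lemma smul_add: "smul c (u + v) = smul c u + smul c v"
  by (rule poly_mapping_eqI) (simp add: lookup_add algebra_simps)

lemma smul_zero[simp]: "smul c 0 = 0"
  by (rule poly_mapping_eqI) simp

lemma smul_0[simp]: "smul 0 v = 0"
  by (rule poly_mapping_eqI) simp

lemma smul_1[simp]: "smul 1 v = v"
  by (rule poly_mapping_eqI) simp

lemma smul_smul[simp]: "smul c (smul d v) = smul (c*d) v"
  by (rule poly_mapping_eqI) simp

lemma smul_single[simp]: "smul c (sg k d) = sg k (c*d)"
  by (rule poly_mapping_eqI) (simp add: lookup_single when_def)

lemma smul_sum: "smul c (sum g A) = (\<Sum>a\<in>A. smul c (g a))"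
  by (rule poly_mapping_eqI) (simp add: lookup_sum sum_distrib_left)

lemma lookup_lin_ext: "lk (lin_ext g v) k = (\<Sum>a\<in>ks v. lk v a * lk (g a) k)"
  by (simp add: lin_ext_def lookup_sum)

lemma lookup_lin_ext_sup:
  assumes "finite S" "ks v \<subseteq> S"
  shows "lk (lin_ext g v) k = (\<Sum>a\<in>S. lk v a * lk (g a) k)"
  unfolding lookup_lin_ext
  by (rule sum.mono_neutral_left) (use assms in \<open>auto simp: in_keys_iff\<close>)

lemma lin_ext_linear: "is_linear (lin_ext g)"
  unfolding is_linear_def
proof (intro conjI allI)
  fix u v
  show "lin_ext g (u + v) = lin_ext g u + lin_ext g v"
  proof (rule poly_mapping_eqI)
    fix k
    let ?S = "ks u \<union> ks v"
    have "ks (u+v) \<subseteq> ?S" by (rule keys_add)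
    then show "lk (lin_ext g (u + v)) k = lk (lin_ext g u + lin_ext g v) k"
      by (simp add: lookup_add lookup_lin_ext_sup[of ?S] sum.distrib algebra_simps)
  qed
next
  fix c v
  show "lin_ext g (smul c v) = smul c (lin_ext g v)"
  proof (rule poly_mapping_eqI)
    fix k
    have "ks (smul c v) \<subseteq> ks v" by (auto simp: in_keys_iff)
    then show "lk (lin_ext g (smul c v)) k = lk (smul c (lin_ext g v)) k"
      by (simp add: lookup_lin_ext_sup[of "ks v"] sum_distrib_left algebra_simps)
  qed
qed

lemma lin_ext_single: "lin_ext g (sg a c) = smul c (g a)"
proof (rule poly_mapping_eqI)
  fix k show "lk (lin_ext g (sg a c)) k = lk (smul c (g a)) k"
    by (subst lookup_lin_ext_sup[of "{a}"]) (auto simp: lookup_single when_def)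
qed

lemma linear_zero: "is_linear f \<Longrightarrow> f 0 = 0"
proof -
  assume "is_linear f"
  then have "f (0+0) = f 0 + f 0" unfolding is_linear_def by blast
  then show "f 0 = 0" by simp
qed

lemma linear_sum: "is_linear f \<Longrightarrow> f (sum g A) = (\<Sum>a\<in>A. f (g a))"
proof (induction A rule: infinite_finite_induct)
  case (insert x F)
  then have "f (g x + sum g F) = f (g x) + f (sum g F)" unfolding is_linear_def by blast
  with insert show ?case by simp
qed (auto simp: linear_zero)

lemma linear_comp: "is_linear f \<Longrightarrow> is_linear g \<Longrightarrow> is_linear (f \<circ> g)"
  by (simp add: is_linear_def)

lemma pm_decomp: "v = (\<Sum>a\<in>ks v. smul (lk v a) (sg a 1))"
proof (rule poly_mapping_eqI)
  fix k show "lk v k = lk (\<Sum>a\<in>ks v. smul (lk v a) (sg a 1)) k"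
    by (cases "k \<in> ks v") (auto simp: lookup_sum lookup_single when_def in_keys_iff)
qed

lemma linear_lin_ext: assumes "is_linear f" shows "f v = lin_ext (\<lambda>a. f (sg a 1)) v"
proof -
  have "f v = f (\<Sum>a\<in>ks v. smul (lk v a) (sg a 1))" by (rule arg_cong[where f=f], rule pm_decomp)
  also have "\<dots> = (\<Sum>a\<in>ks v. f (smul (lk v a) (sg a 1)))" by (rule linear_sum[OF assms])
  also have "\<dots> = (\<Sum>a\<in>ks v. smul (lk v a) (f (sg a 1)))"
    using assms unfolding is_linear_def by (simp del: smul_single)
  finally show ?thesis by (simp add: lin_ext_def)
qed

lemma linear_eqI:
  assumes "is_linear f" "is_linear g" "\<And>a. f (sg a 1) = g (sg a 1)"
  shows "f = g"
proof
  fix v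
  have "f v = lin_ext (\<lambda>a. f (sg a 1)) v" by (rule linear_lin_ext[OF assms(1)])
  also have "\<dots> = lin_ext (\<lambda>a. g (sg a 1)) v" using assms(3) by simp
  also have "\<dots> = g v" by (rule linear_lin_ext[OF assms(2), symmetric])
  finally show "f v = g v" .
qed

lemma id_linear: "is_linear id" by (simp add: is_linear_def)

lemma lookup_tens: "lk (tens u v) (a, b) = lk u a * lk v b"
proof -
  have "lk (tens u v) (a, b) = (\<Sum>a'\<in>ks u. if a' = a then (\<Sum>b'\<in>ks v.
      (if b' = b then lk u a' * lk v b' else 0)) else 0)"
    unfolding tens_def lookup_sum by (intro sum.cong refl) (auto simp: lookup_single when_def)
  also have "\<dots> = (if a \<in> ks u then (if b \<in> ks v then lk u a * lk v b else 0) else 0)"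
    by (simp only: sum.delta finite_keys)
  also have "\<dots> = lk u a * lk v b"
    by (simp add: in_keys_iff)
  finally show ?thesis .
qed

lemma tens_single: "tens (sg a c) (sg b d) = sg (a,b) (c*d)"
proof (rule poly_mapping_eqI)
  fix k :: "'a \<times> 'b"
  obtain x y where k: "k = (x,y)" by force
  show "lk (tens (sg a c) (sg b d)) k = lk (sg (a, b) (c * d)) k"
    unfolding k lookup_tens by (simp add: lookup_single when_def)
qed

lemma tens_linear: "is_linear (tens_map f g)"
  unfolding tens_map_def by (rule lin_ext_linear)

lemma qDelta_linear: "is_linear (qDelta q)"
  unfolding qDelta_def by (rule lin_ext_linear)

lemma qDelta_single: "qDelta q (sg (n,m) d) =
   (\<Sum>i\<in>{0..m}. sg ((n, i), (n + int i, m - i)) (d * qbinom q m i))"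
  by (simp add: qDelta_def lin_ext_single smul_sum)

lemma tens_map_single: "tens_map f g (sg (a,b) d) = smul d (tens (f (sg a 1)) (g (sg b 1)))"
  by (simp add: tens_map_def lin_ext_single)

lemma tens_map_qDelta: "tens_map f g (qDelta q (sg (n,m) 1)) =
   (\<Sum>i\<in>{0..m}. smul (qbinom q m i) (tens (f (sg (n,i) 1)) (g (sg (n + int i, m - i) 1))))"
  by (simp add: qDelta_single linear_sum[OF tens_linear] tens_map_single)

lemma GL: "lk (tens_map f f (qDelta q (sg (n,m) 1))) (c, d) =
   (\<Sum>i\<in>{0..m}. qbinom q m i * (lk (f (sg (n,i) 1)) c * lk (f (sg (n + int i, m - i) 1)) d))"
  by (simp add: tens_map_qDelta lookup_sum lookup_tens)

lemma DL: "lk (qDelta q v) ((a,i),(c,i')) =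
   (if c = a + int i then qbinom q (i+i') i * lk v (a,i+i') else 0)"
proof -
  have "lk (qDelta q v) ((a,i),(c,i')) = (\<Sum>b\<in>ks v. lk v b *
     (if b = (a, i+i') \<and> c = a + int i then qbinom q (i+i') i else 0))"
    unfolding qDelta_def lookup_lin_ext
  proof (intro sum.cong refl)
    fix b assume "b \<in> ks v"
    obtain n m where b: "b = (n,m)" by force
    have "(\<Sum>ia\<in>{0..m}. lk (sg ((n, ia), n + int ia, m - ia) (qbinom q m ia)) ((a, i), c, i'))
        = (\<Sum>ia\<in>{0..m}. if ia = i then (if n = a \<and> c = n + int i \<and> i' = m - i then qbinom q m i else 0) else 0)"
      by (intro sum.cong refl) (auto simp: lookup_single when_def)
    also have "\<dots> = (if b = (a, i+i') \<and> c = a + int i then qbinom q (i+i') i else 0)"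
      using b by auto
    finally show "lk v b * lk (case b of (n, m) \<Rightarrow> \<Sum>ia = 0..m. sg ((n, ia), n + int ia, m - ia) (qbinom q m ia)) ((a, i), c, i')
       = lk v b * (if b = (a, i + i') \<and> c = a + int i then qbinom q (i + i') i else 0)"
      using b by (simp add: lookup_sum)
  qed
  also have "\<dots> = (\<Sum>b\<in>ks v. if b = (a, i+i') then (if c = a + int i then qbinom q (i+i') i * lk v b else 0) else 0)"
    by (intro sum.cong refl) auto
  also have "\<dots> = (if c = a + int i then qbinom q (i+i') i * lk v (a,i+i') else 0)"
    by (simp only: sum.delta finite_keys) (auto simp: in_keys_iff)
  finally show ?thesis .
qed


definition mm :: "int \<Rightarrow> (int \<Rightarrow> nat \<Rightarrow> 'k::field) \<Rightarrow> 'k qH \<Rightarrow> 'k qH" where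
  "mm r c = lin_ext (\<lambda>(n,m). sg (n+r, m) (c n m))"

lemma mm_linear: "is_linear (mm r c)"
  unfolding mm_def by (rule lin_ext_linear)

lemma mm_single: "mm r c (sg (n,m) d) = sg (n+r,m) (d * c n m)"
  by (simp add: mm_def lin_ext_single)

lemma mm_comp: "mm r c \<circ> mm t d = mm (t+r) (\<lambda>n m. d n m * c (n+t) m)"
proof (rule linear_eqI)
  show "is_linear (mm r c \<circ> mm t d)" by (intro linear_comp mm_linear)
  show "is_linear (mm (t + r) (\<lambda>n m. d n m * c (n + t) m))" by (rule mm_linear)
  fix a :: "int \<times> nat"
  obtain n m where a: "a = (n,m)" by force
  show "(mm r c \<circ> mm t d) (sg a 1) = mm (t + r) (\<lambda>n m. d n m * c (n + t) m) (sg a 1)"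
    unfolding a by (simp add: mm_single add.assoc)
qed

lemma mm_id: "mm 0 (\<lambda>_ _. 1) = id"
proof (rule linear_eqI)
  show "is_linear (mm 0 (\<lambda>_ _. 1))" by (rule mm_linear)
  show "is_linear (id :: 'a::field qH \<Rightarrow> _)" by (rule id_linear)
  fix a :: "int \<times> nat"
  obtain n m where a: "a = (n,m)" by force
  show "mm 0 (\<lambda>_ _. 1) (sg a 1) = id (sg a (1::'a))" unfolding a by (simp add: mm_single)
qed

lemma theta_mm: "theta r = mm r (\<lambda>_ _. 1)"
  by (simp add: theta_def mm_def)

lemma phi_mm: "phi \<alpha> = mm 0 (\<lambda>n m. \<Prod>i<m. \<alpha> (n + int i))"
  by (simp add: phi_def mm_def)

lemma Psi_mm: "Psi (\<alpha>, r) = mm r (\<lambda>n m. \<Prod>i<m. \<alpha> (n + r + int i))"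
  by (simp add: Psi_def theta_mm phi_mm mm_comp)

lemma mm_lookup: "lk (mm r c v) (n', m) = lk v (n' - r, m) * c (n' - r) m"
proof -
  have "lk (mm r c v) (n', m) = (\<Sum>b\<in>ks v. if b = (n' - r, m) then lk v b * c (n' - r) m else 0)"
    unfolding mm_def lookup_lin_ext
    by (intro sum.cong refl) (auto simp: lookup_single when_def split: if_splits)
  also have "\<dots> = lk v (n' - r, m) * c (n' - r) m"
    by (simp only: sum.delta finite_keys) (auto simp: in_keys_iff)
  finally show ?thesis .
qed

lemma mm_graded: "graded (mm r c)"
  unfolding graded_def in_Hm_def
proof (intro allI impI ballI)
  fix m v a
  assume H: "\<forall>a\<in>ks v. snd a = m" and a: "a \<in> ks (mm r c v)"
  obtain n' m' where a': "a = (n', m')" by force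
  from a have "lk v (n' - r, m') \<noteq> 0" unfolding a' by (auto simp: in_keys_iff mm_lookup)
  then have "(n' - r, m') \<in> ks v" by (simp add: in_keys_iff)
  with H show "snd a = m" using a' by force
qed

lemma qeps_sup:
  assumes "finite S" "ks w \<subseteq> S"
  shows "qeps w = (\<Sum>a\<in>S. if snd a = 0 then lk w a else 0)"
  unfolding qeps_def
  by (rule sum.mono_neutral_left) (use assms in \<open>auto simp: in_keys_iff\<close>)

lemma mm_counit:
  assumes "\<And>n. c n 0 = 1"
  shows "qeps (mm r c v) = qeps v"
proof -
  let ?h = "\<lambda>(n::int, m::nat). (n + r, m)"
  have inj: "inj_on ?h (ks v)" by (auto simp: inj_on_def)
  have sub: "ks (mm r c v) \<subseteq> ?h ` ks v"
  proof
    fix a assume a: "a \<in> ks (mm r c v)"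
    obtain n' m' where a': "a = (n', m')" by force
    from a have "lk v (n' - r, m') \<noteq> 0" unfolding a' by (auto simp: in_keys_iff mm_lookup)
    then have "(n' - r, m') \<in> ks v" by (simp add: in_keys_iff)
    then show "a \<in> ?h ` ks v" unfolding a' by (auto intro: image_eqI[where x="(n'-r, m')"])
  qed
  have "qeps (mm r c v) = (\<Sum>a\<in>?h ` ks v. if snd a = 0 then lk (mm r c v) a else 0)"
    by (rule qeps_sup) (use sub in auto)
  also have "\<dots> = (\<Sum>b\<in>ks v. if snd b = 0 then lk v b else 0)"
    by (subst sum.reindex[OF inj]) (auto intro!: sum.cong simp: mm_lookup assms)
  also have "\<dots> = qeps v" by (simp add: qeps_def)
  finally show ?thesis .
qed

lemma mm_comult:
  assumes "\<And>n m i. i \<le> m \<Longrightarrow> c n m = c n i * c (n + int i) (m - i)"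
  shows "qDelta q (mm r c v) = tens_map (mm r c) (mm r c) (qDelta q v)"
proof -
  have "qDelta q \<circ> mm r c = tens_map (mm r c) (mm r c) \<circ> qDelta q"
  proof (rule linear_eqI)
    show "is_linear (qDelta q \<circ> mm r c)" by (intro linear_comp qDelta_linear mm_linear)
    show "is_linear (tens_map (mm r c) (mm r c) \<circ> qDelta q)" by (intro linear_comp qDelta_linear tens_linear)
    fix a :: "int \<times> nat"
    obtain n m where a: "a = (n,m)" by force
    have L: "(qDelta q \<circ> mm r c) (sg a 1) = qDelta q (sg (n+r,m) (1 * c n m))" by (simp add: a mm_single)
    have R: "(tens_map (mm r c) (mm r c) \<circ> qDelta q) (sg a 1) = tens_map (mm r c) (mm r c) (qDelta q (sg (n,m) 1))"
      by (simp add: a)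
    show "(qDelta q \<circ> mm r c) (sg a 1) = (tens_map (mm r c) (mm r c) \<circ> qDelta q) (sg a 1)"
      unfolding L R tens_map_qDelta unfolding qDelta_single mm_single
    proof (intro sum.cong refl)
      fix i assume "i \<in> {0..m}"
      then have i: "i \<le> m" by simp
      show "sg ((n + r, i), n + r + int i, m - i) (1 * c n m * qbinom q m i) =
         smul (qbinom q m i) (tens (sg (n + r, i) (1 * c n i)) (sg (n + int i + r, m - i) (1 * c (n + int i) (m - i))))"
        using assms[OF i, of n] by (simp add: tens_single ac_simps)
    qed
  qed
  then show ?thesis by (metis comp_apply)
qed

lemma bij_from_inv: "f \<circ> g = id \<Longrightarrow> g \<circ> f = id \<Longrightarrow> bij f"
  unfolding bij_def inj_def surj_def by (metis comp_apply id_apply)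

lemma mm_bij:
  assumes "\<And>n m. c n m \<noteq> 0"
  shows "bij (mm r c)"
proof (rule bij_from_inv)
  let ?d = "\<lambda>n m. 1 / c (n - r) m"
  have "mm r c \<circ> mm (-r) ?d = mm 0 (\<lambda>_ _. 1)"
    unfolding mm_comp using assms by (simp add: )
  then show "mm r c \<circ> mm (-r) ?d = id" by (simp add: mm_id)
  have "mm (-r) ?d \<circ> mm r c = mm 0 (\<lambda>_ _. 1)"
    unfolding mm_comp using assms by (simp add: )
  then show "mm (-r) ?d \<circ> mm r c = id" by (simp add: mm_id)
qed

lemma prod_split:
  fixes g :: "nat \<Rightarrow> 'a::comm_monoid_mult"
  shows "i \<le> m \<Longrightarrow> (\<Prod>j<m. g j) = (\<Prod>j<i. g j) * (\<Prod>j<m-i. g (i+j))"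
proof (induction m)
  case 0 then show ?case by simp
next
  case (Suc m)
  show ?case
  proof (cases "i = Suc m")
    case True then show ?thesis by simp
  next
    case False
    with Suc have "i \<le> m" by simp
    with Suc.IH have "(\<Prod>j<m. g j) = (\<Prod>j<i. g j) * (\<Prod>j<m-i. g (i+j))" by simp
    moreover have "Suc m - i = Suc (m - i)" using \<open>i \<le> m\<close> by simp
    ultimately show ?thesis using \<open>i \<le> m\<close> by (simp add: ac_simps)
  qed
qed


lemma qbinom_00[simp]: "qbinom q 0 0 = 1" by (simp add: qbinom_def qfact_def)
lemma qbinom_10[simp]: "qbinom q 1 0 = 1" by (simp add: qbinom_def qfact_def qint_def)
lemma qbinom_11[simp]: "qbinom q 1 1 = 1" by (simp add: qbinom_def qfact_def qint_def)

lemma qbinom_S0[simp]: "qbinom q (Suc 0) 0 = 1" by (simp add: qbinom_def qfact_def qint_def)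
lemma qbinom_SS[simp]: "qbinom q (Suc 0) (Suc 0) = 1" by (simp add: qbinom_def qfact_def qint_def)

lemma qint_nz: assumes "\<forall>n::nat. n > 0 \<longrightarrow> q ^ n \<noteq> 1" "j > 0" shows "qint q j \<noteq> 0"
proof
  assume "qint q j = 0"
  then have "q ^ j - 1 = 0" by (simp add: power_diff_1_eq qint_def)
  with assms show False by simp
qed

lemma qfact_nz: assumes "\<forall>n::nat. n > 0 \<longrightarrow> q ^ n \<noteq> 1" shows "qfact q m \<noteq> 0"
  unfolding qfact_def using qint_nz[OF assms] by (simp add: prod_zero_iff)

lemma qbinom_nz: assumes "\<forall>n::nat. n > 0 \<longrightarrow> q ^ n \<noteq> 1" shows "qbinom q m i \<noteq> 0"
  unfolding qbinom_def using qfact_nz[OF assms] by simp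

lemma sum01: "(\<Sum>i\<in>{0..1::nat}. g i) = g 0 + g 1"
  by (simp add: atLeast0_atMost_Suc add.commute)

lemma Psi_carrier:
  assumes "\<forall>n. \<alpha> n \<noteq> 0"
  shows "Psi (\<alpha>, r) \<in> carrier (AutGr q)"
proof -
  let ?c = "\<lambda>n m. \<Prod>i<m. \<alpha> (n + r + int i)"
  have nz: "\<And>n m. ?c n m \<noteq> 0" using assms by (simp add: prod_zero_iff)
  have split: "?c n m = ?c n i * ?c (n + int i) (m - i)" if "i \<le> m" for n m i
    using prod_split[OF that, of "\<lambda>j. \<alpha> (n + r + int j)"] by (simp add: ac_simps)
  show ?thesis
    unfolding AutGr_def coalg_aut_def Psi_mm
    using mm_linear[of r ?c] mm_bij[OF nz, of r] mm_comult[OF split, of q r] mm_counit[of ?c r] mm_graded[of r ?c] by simp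
qed

lemma Psi_hom:
  "Psi ((\<lambda>n. \<alpha> n * \<beta> (n - r)), r + t) = Psi (\<alpha>, r) \<circ> Psi (\<beta>, t)"
proof -
  have "(\<lambda>n m. \<Prod>i<m. \<alpha> (n + (r + t) + int i) * \<beta> (n + (r + t) + int i - r)) =
        (\<lambda>n m. (\<Prod>i<m. \<beta> (n + t + int i)) * (\<Prod>i<m. \<alpha> (n + t + r + int i)))"
    by (intro ext) (simp add: prod.distrib ac_simps)
  then show ?thesis unfolding Psi_mm mm_comp by (simp add: ac_simps)
qed

lemma Psi_inj:
  assumes "Psi (\<alpha>, r) = Psi (\<beta>, t)"
  shows "(\<alpha>, r) = (\<beta>, t)"
proof -
  have "lk (Psi (\<alpha>, r) (sg (0,0) 1)) (r, 0) = lk (Psi (\<beta>, t) (sg (0,0) 1)) (r, 0)" using assms by simp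
  then have rt: "r = t" by (simp add: Psi_mm mm_single lookup_single when_def split: if_splits)
  have "\<alpha> n = \<beta> n" for n
  proof -
    have "lk (Psi (\<alpha>, r) (sg (n - r,1) 1)) (n, 1) = lk (Psi (\<beta>, t) (sg (n - r,1) 1)) (n, 1)" using assms by simp
    then show ?thesis using rt by (simp add: Psi_mm mm_single)
  qed
  with rt show ?thesis by auto
qed


lemma in_Hm_single: "in_Hm m (sg (n,m) d)"
  by (simp add: in_Hm_def)

lemma GR: assumes "graded f" "i' \<noteq> i" shows "lk (f (sg (n,i) 1)) (j,i') = 0"
proof -
  have "in_Hm i (f (sg (n,i) 1))" using assms(1) in_Hm_single unfolding graded_def by blast
  then have "(j,i') \<notin> ks (f (sg (n,i) 1))" using assms(2) unfolding in_Hm_def by force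
  then show ?thesis by (simp add: in_keys_iff)
qed

lemma surj_part:
  assumes q1: "\<forall>n::nat. n > 0 \<longrightarrow> q ^ n \<noteq> 1"
    and f: "f \<in> carrier (AutGr q)"
  shows "\<exists>\<alpha> r. (\<forall>n. \<alpha> n \<noteq> 0) \<and> f = Psi (\<alpha>, r)"
proof -
  have lin: "is_linear f" and bij: "bij f" and com: "\<And>v. qDelta q (f v) = tens_map f f (qDelta q v)"
    and cou: "\<And>v. qeps (f v) = qeps v" and gr: "graded f"
    using f by (auto simp: AutGr_def coalg_aut_def)
  have inj: "inj f" using bij by (simp add: bij_def)
  have f0: "f 0 = 0" by (rule linear_zero[OF lin])
  have comL: "lk (qDelta q (f (sg (n,m) 1))) k = lk (tens_map f f (qDelta q (sg (n,m) 1))) k" for n m k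
    by (simp add: com)
  have "\<exists>s. f (sg (n,0) 1) = sg (s,0) 1" for n
  proof -
    let ?e = "f (sg (n,0) 1)"
    have key: "lk ?e (j,0) * lk ?e (k,0) = (if k = j then lk ?e (j,0) else 0)" for j k
    proof -
      have 1: "lk (qDelta q ?e) ((j,0),(k,0)) = (if k = j then lk ?e (j,0) else 0)"
        using DL[of q ?e j 0 k 0] by simp
      have 2: "lk (tens_map f f (qDelta q (sg (n,0) 1))) ((j,0),(k,0)) = lk ?e (j,0) * lk ?e (k,0)"
        by (simp add: GL)
      show ?thesis using comL[of n 0 "((j,0),(k,0))"] 1 2 by simp
    qed
    have "qeps ?e = 1" using cou[of "sg (n,0) 1"] by (simp add: qeps_def)
    then have "ks ?e \<noteq> {}" by (auto simp: qeps_def)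
    then obtain a where a: "a \<in> ks ?e" by blast
    obtain s m where am: "a = (s,m)" by force
    have "m = 0" using a GR[OF gr, of m 0 n s] am by (auto simp: in_keys_iff)
    with a am have g: "lk ?e (s,0) \<noteq> 0" by (simp add: in_keys_iff)
    then have g1: "lk ?e (s,0) = 1" using key[of s s] by simp
    show ?thesis
    proof (intro exI poly_mapping_eqI)
      fix k :: "int \<times> nat"
      obtain j i where k: "k = (j,i)" by force
      show "lk ?e k = lk (sg (s,0) 1) k"
      proof (cases "i = 0")
        case True
        show ?thesis
        proof (cases "j = s")
          case False
          then have "lk ?e (s,0) * lk ?e (j,0) = 0" using key[of s j] by simp
          then show ?thesis using g False k True by (simp add: lookup_single when_def)
        qed (use g1 k True in simp)
      next
        case False
        then show ?thesis using GR[OF gr False, of n j] k by (simp add: lookup_single when_def)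
      qed
    qed
  qed
  then obtain \<sigma> where sig: "\<And>n. f (sg (n,0) 1) = sg (\<sigma> n,0) 1" by metis
  have step: "(\<exists>a. a \<noteq> 0 \<and> f (sg (n,1) 1) = sg (\<sigma> n, 1) a) \<and> \<sigma> (n+1) = \<sigma> n + 1" for n
  proof -
    let ?h = "f (sg (n,1) 1)"
    have h0: "lk ?h (j,0) = 0" for j using GR[OF gr, of 0 1 n j] by simp
    have k1: "lk ?h (j,1) = 0" if "\<sigma> n \<noteq> j" for j
      using comL[of n 1 "((j,0),(j,1))"] that by (simp add: DL GL sum01 sig h0 lookup_single when_def)
    have hs: "?h = sg (\<sigma> n, 1) (lk ?h (\<sigma> n, 1))"
    proof (rule poly_mapping_eqI)
      fix k :: "int \<times> nat"
      obtain j i where k: "k = (j,i)" by force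
      show "lk ?h k = lk (sg (\<sigma> n, 1) (lk ?h (\<sigma> n, 1))) k"
      proof (cases "i = 1")
        case True then show ?thesis using k k1[of j] by (cases "\<sigma> n = j") (auto simp: lookup_single when_def)
      next
        case False then show ?thesis using GR[OF gr False, of n j] k by (simp add: lookup_single when_def)
      qed
    qed
    have anz: "lk ?h (\<sigma> n, 1) \<noteq> 0"
    proof
      assume "lk ?h (\<sigma> n, 1) = 0"
      then have ff: "f (sg (n,1) 1) = f 0" using hs f0 by simp
      show False using injD[OF inj ff] by (metis lookup_single_eq lookup_zero one_neq_zero)
    qed
    have "lk (qDelta q ?h) ((\<sigma> n,1),(\<sigma> n + 1,0)) = lk (tens_map f f (qDelta q (sg (n,1) 1))) ((\<sigma> n,1),(\<sigma> n + 1,0))"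
      by (rule comL)
    then have "lk ?h (\<sigma> n, 1) = lk ?h (\<sigma> n, 1) * (if \<sigma> (n+1) = \<sigma> n + 1 then 1 else 0)"
      by (simp add: DL GL sum01 sig lookup_single when_def)
    then have "\<sigma> (n+1) = \<sigma> n + 1" using anz by (auto split: if_splits)
    with hs anz show ?thesis by blast
  qed
  define r where "r = \<sigma> 0"
  have sigr: "\<sigma> n = n + r" for n
  proof (induction n rule: int_induct[where k=0])
    case base then show ?case by (simp add: r_def)
  next
    case (step1 i) then show ?case using step[of i] by simp
  next
    case (step2 i) then show ?case using step[of "i - 1"] by simp
  qed
  have "\<exists>a. a \<noteq> 0 \<and> f (sg (n,1) 1) = sg (n + r, 1) a" for n using step[of n] sigr by simp
  then obtain A where A: "\<And>n. A n \<noteq> 0" and fA: "\<And>n. f (sg (n,1) 1) = sg (n + r, 1) (A n)" by metis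
  have fA1: "\<And>n. f (sg (n, Suc 0) 1) = sg (n + r, Suc 0) (A n)" using fA by simp
  have high: "f (sg (n, Suc k) 1) = sg (n + r, Suc k) (\<Prod>i<Suc k. A (n + int i))" for k n
  proof (induction k arbitrary: n)
    case 0 then show ?case using fA1[of n] by simp
  next
    case (Suc k)
    let ?u = "f (sg (n, Suc (Suc k)) 1)"
    let ?P = "\<Prod>i<Suc k. A (n + 1 + int i)"
    have qb: "qbinom q (Suc (Suc k)) 1 \<noteq> 0" by (rule qbinom_nz[OF q1])
    have coef: "lk ?u (j, Suc (Suc k)) = (if j = n + r then A n * ?P else 0)" for j
    proof -
      have "lk (qDelta q ?u) ((j,1),(j+1,Suc k)) = lk (tens_map f f (qDelta q (sg (n,Suc (Suc k)) 1))) ((j,1),(j+1,Suc k))"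
        by (rule comL)
      also have "\<dots> = (\<Sum>i\<in>{0..Suc (Suc k)}. if i = 1 then qbinom q (Suc (Suc k)) 1 *
            (lk (f (sg (n,1) 1)) (j,1) * lk (f (sg (n + 1, Suc k) 1)) (j+1, Suc k)) else 0)"
        unfolding GL by (intro sum.cong refl) (auto simp: GR[OF gr])
      also have "\<dots> = qbinom q (Suc (Suc k)) 1 * (if j = n + r then A n * ?P else 0)"
        using Suc.IH[of "n+1"] by (simp add: fA1 lookup_single when_def ac_simps)
      finally have "qbinom q (Suc (Suc k)) 1 * lk ?u (j, Suc (Suc k)) = qbinom q (Suc (Suc k)) 1 * (if j = n + r then A n * ?P else 0)"
        by (simp add: DL)
      with qb show ?thesis by simp
    qed
    have "?u = sg (n + r, Suc (Suc k)) (A n * ?P)"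
    proof (rule poly_mapping_eqI)
      fix kk :: "int \<times> nat"
      obtain j i where k: "kk = (j,i)" by force
      show "lk ?u kk = lk (sg (n + r, Suc (Suc k)) (A n * ?P)) kk"
      proof (cases "i = Suc (Suc k)")
        case True then show ?thesis using k coef[of j] by (auto simp: lookup_single when_def)
      next
        case False then show ?thesis using GR[OF gr False, of n j] k by (simp add: lookup_single when_def)
      qed
    qed
    moreover have "(\<Prod>i<Suc (Suc k). A (n + int i)) = A n * ?P"
      by (subst prod.lessThan_Suc_shift) (simp add: ac_simps)
    ultimately show ?case by simp
  qed
  define \<alpha> where "\<alpha> j = A (j - r)" for j
  have "f = Psi (\<alpha>, r)"
  proof (rule linear_eqI[OF lin])
    show "is_linear (Psi (\<alpha>, r))" unfolding Psi_mm by (rule mm_linear)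
    fix a :: "int \<times> nat"
    obtain n m where a: "a = (n,m)" by force
    show "f (sg a 1) = Psi (\<alpha>, r) (sg a 1)"
    proof (cases m)
      case 0 then show ?thesis using a sig sigr by (simp add: Psi_mm mm_single)
    next
      case (Suc k) then show ?thesis using a high by (simp add: Psi_mm mm_single \<alpha>_def)
    qed
  qed
  moreover have "\<forall>n. \<alpha> n \<noteq> 0" using A by (simp add: \<alpha>_def)
  ultimately show ?thesis by blast
qed


theorem theorem2p13:
  fixes q :: "'k::field"
  assumes "q \<noteq> 0"
    and "\<forall>n::nat. n > 0 \<longrightarrow> q ^ n \<noteq> 1"
  shows "Psi \<in> iso (semidir :: ((int \<Rightarrow> 'k) \<times> int) monoid) (AutGr q)"
  unfolding iso_def hom_def bij_betw_def
proof (intro CollectI conjI)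
  show "Psi \<in> carrier (semidir :: ((int \<Rightarrow> 'k) \<times> int) monoid) \<rightarrow> carrier (AutGr q)"
    using Psi_carrier by (auto simp: semidir_def)
  show "\<forall>x\<in>carrier (semidir :: ((int \<Rightarrow> 'k) \<times> int) monoid). \<forall>y\<in>carrier semidir.
          Psi (x \<otimes>\<^bsub>semidir\<^esub> y) = Psi x \<otimes>\<^bsub>AutGr q\<^esub> Psi y"
    by (auto simp: semidir_def AutGr_def Psi_hom)
  show "inj_on Psi (carrier (semidir :: ((int \<Rightarrow> 'k) \<times> int) monoid))"
    by (auto simp: inj_on_def dest: Psi_inj)
  show "Psi ` carrier (semidir :: ((int \<Rightarrow> 'k) \<times> int) monoid) = carrier (AutGr q)"
  proof
    show "Psi ` carrier semidir \<subseteq> carrier (AutGr q)"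
      using Psi_carrier by (auto simp: semidir_def)
    show "carrier (AutGr q) \<subseteq> Psi ` carrier (semidir :: ((int \<Rightarrow> 'k) \<times> int) monoid)"
    proof
      fix f assume "f \<in> carrier (AutGr q)"
      then obtain \<alpha> r where "\<forall>n. \<alpha> n \<noteq> 0" "f = Psi (\<alpha>, r)" using surj_part[OF assms(2)] by blast
      then show "f \<in> Psi ` carrier (semidir :: ((int \<Rightarrow> 'k) \<times> int) monoid)"
        by (auto simp: semidir_def)
    qed
  qed
qed

end
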